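(* Let $S_1,\dots,S_n$ be real scores, $\alpha\in(0,1)$, $r=\lceil(1-\alpha)(n+1)\rceil$, and let $m_n\ge 0$ be an integer with $r+m_n\le n$. Let $[a,b]$ be a range with $b\ge \max_{1\le i\le n}S_i$, let $N\ge 1$ be an integer, $\sigma>0$, and $\beta\in(0,1)$. Let $\hat q$ be the output of the Buffered DP Right-Endpoint Binary Search (described in the context) run with these inputs. Then, with probability at least $1-\beta$ (over the Gaussian noise, conditionally on the scores), $\hat q\ge S_{(r+m_n)}$, where $S_{(k)}$ denotes the $k$-th smallest of $S_1,\dots,S_n$.
   Context: Notation: $C_n(t):=\sum_{i=1}^n \mathbb 1\{S_i\le t\}$ is the empirical count function; $\Phi$ is the standard normal CDF. Buffered DP Right-Endpoint Binary Search (Algorithm 2): input scores $S_1,\dots,S_n$, range $[a,b]$, miscoverage level $\alpha$, buffer $m_n$, number of steps $N$, noise scale $\sigma$, failure probability $\beta$. Set $r=\lceil(1-\alpha)(n+1)\rceil$, $\tau=\sigma\Phi^{-1}(1-\beta/N)-1$, $r'=r+m_n+\tau$, $\texttt{left}=a$, $\texttt{right}=b$. For $k=1,\dots,N$: set $\texttt{mid}=(\texttt{left}+\texttt{right})/2$; draw $Z_k\sim\mathcal N(0,\sigma^2)$ independently of everything else (including previous steps) and compute $\tilde C_k=C_n(\texttt{mid})+Z_k$; if $\tilde C_k\ge r'$ set $\texttt{right}=\texttt{mid}$, otherwise set $\texttt{left}=\texttt{mid}$. Output $\hat q=\texttt{right}$. *)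

theory Defs
  imports "HOL-Probability.Probability"
begin

definition Phi :: "real \<Rightarrow> real" where
  "Phi x = cdf (density lborel std_normal_density) x"

definition Phi_inv :: "real \<Rightarrow> real" where
  "Phi_inv p = (THE x. Phi x = p)"

definition emp_count :: "nat \<Rightarrow> (nat \<Rightarrow> real) \<Rightarrow> real \<Rightarrow> nat" where
  "emp_count n S t = card {i \<in> {1..n}. S i \<le> t}"

definition order_stat :: "nat \<Rightarrow> (nat \<Rightarrow> real) \<Rightarrow> nat \<Rightarrow> real" where
  "order_stat n S k = sort (map S [1..<n+1]) ! (k - 1)"

fun bs_state :: "(real \<Rightarrow> real) \<Rightarrow> real \<Rightarrow> (nat \<Rightarrow> real) \<Rightarrow> real \<Rightarrow> real \<Rightarrow> nat \<Rightarrow> real \<times> real" where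
  "bs_state C r' z a b 0 = (a, b)"
| "bs_state C r' z a b (Suc k) =
     (let (l, rt) = bs_state C r' z a b k; mid = (l + rt) / 2
      in if C mid + z k \<ge> r' then (l, mid) else (mid, rt))"

(* Algorithm 2: output q_hat as a function of the noise realisation z (z k = Z_{k+1}) *)
definition dp_bs_output :: "nat \<Rightarrow> (nat \<Rightarrow> real) \<Rightarrow> real \<Rightarrow> real \<Rightarrow> real \<Rightarrow> nat \<Rightarrow> nat \<Rightarrow> real \<Rightarrow> real \<Rightarrow> (nat \<Rightarrow> real) \<Rightarrow> real" where
  "dp_bs_output n S a b \<alpha> m N \<sigma> \<beta> z =
     (let r = \<lceil>(1 - \<alpha>) * (real n + 1)\<rceil>;
          \<tau> = \<sigma> * Phi_inv (1 - \<beta> / real N) - 1;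
          r' = real_of_int r + real m + \<tau>
      in snd (bs_state (\<lambda>t. real (emp_count n S t)) r' z a b N))"

definition noise_space :: "nat \<Rightarrow> real \<Rightarrow> (nat \<Rightarrow> real) measure" where
  "noise_space N \<sigma> = PiM {..<N} (\<lambda>_. density lborel (normal_density 0 \<sigma>))"

end

theory Submission
  imports Defs
begin

abbreviation "M0 \<equiv> density lborel std_normal_density"

lemma M0_prob: "prob_space M0"
  using prob_space_normal_density[of 1 0] by simp

lemma M0_rd: "real_distribution M0"
  unfolding real_distribution_def real_distribution_axioms_def
  using M0_prob by simp

lemma M0_single: "measure M0 {x} = 0"
proof -
  have "AE z in lborel. z \<noteq> x" by (rule AE_I'[of "{x}"]) auto
  hence "AE z in lborel. z \<in> {x} \<longrightarrow> std_normal_density z = 0"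
    by eventually_elim auto
  hence "{x} \<in> null_sets M0"
    by (subst null_sets_density_iff) auto
  thus ?thesis by (simp add: measure_def null_setsD1)
qed

lemma M0_pos: "x < y \<Longrightarrow> measure M0 {x<..y} > 0"
proof (rule ccontr)
  interpret prob_space M0 by (rule M0_prob)
  assume xy: "x < y" and "\<not> measure M0 {x<..y} > 0"
  hence "measure M0 {x<..y} = 0" by (simp add: order.strict_iff_order)
  hence "emeasure M0 {x<..y} = 0" by (simp add: emeasure_eq_measure)
  hence "{x<..y} \<in> null_sets M0" by (auto intro: null_setsI)
  hence "AE z in lborel. z \<in> {x<..y} \<longrightarrow> std_normal_density z = 0"
    by (subst (asm) null_sets_density_iff) auto
  hence "AE z in lborel. z \<notin> {x<..y}"
  proof (rule AE_mp)
    show "AE z in lborel. (z \<in> {x<..y} \<longrightarrow> std_normal_density z = 0) \<longrightarrow> z \<notin> {x<..y}"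
      using normal_density_pos[of 1 0] by (intro AE_I2) (metis less_irrefl zero_less_one)
  qed
  hence "{x<..y} \<in> null_sets lborel"
    by (subst AE_iff_null_sets) auto
  from null_setsD1[OF this] show False using xy by simp
qed

lemma Phi_mono: "x < y \<Longrightarrow> Phi x < Phi y"
proof -
  interpret real_distribution M0 by (rule M0_rd)
  assume "x < y" thus ?thesis using cdf_diff_eq[of x y] M0_pos[of x y]
  unfolding Phi_def by simp
qed

lemma Phi_cont: "isCont Phi x"
proof -
  interpret real_distribution M0 by (rule M0_rd)
  show ?thesis unfolding Phi_def[abs_def] using isCont_cdf M0_single by simp
qed

lemma Phi_top: "(Phi \<longlongrightarrow> 1) at_top"
  unfolding Phi_def[abs_def] using real_distribution.cdf_lim_at_top_prob[OF M0_rd] by simp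

lemma Phi_bot: "(Phi \<longlongrightarrow> 0) at_bot"
proof -
  interpret real_distribution M0 by (rule M0_rd)
  show ?thesis unfolding Phi_def[abs_def] using cdf_lim_at_bot by simp
qed

lemma Phi_inv: assumes "0 < p" "p < 1" shows "Phi (Phi_inv p) = p"
proof -
  have "eventually (\<lambda>x. p < Phi x) at_top" using order_tendstoD(1)[OF Phi_top assms(2)] .
  then obtain B where B: "\<And>x. x \<ge> B \<Longrightarrow> p < Phi x" by (auto simp: eventually_at_top_linorder)
  have "eventually (\<lambda>x. Phi x < p) at_bot" using order_tendstoD(2)[OF Phi_bot assms(1)] .
  then obtain A where A: "\<And>x. x \<le> A \<Longrightarrow> Phi x < p" by (auto simp: eventually_at_bot_linorder)
  define a where "a = min A B"
  have "Phi a \<le> p" using A[of a] by (simp add: a_def)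
  moreover have "p \<le> Phi B" using B[of B] by simp
  moreover have "a \<le> B" by (simp add: a_def)
  ultimately obtain x where x: "Phi x = p"
    using IVT[of Phi a p B] Phi_cont by blast
  have "\<And>y. Phi y = p \<Longrightarrow> y = x"
    by (metis x Phi_mono linorder_neqE_linordered_idom less_irrefl)
  hence "Phi_inv p = x" unfolding Phi_inv_def using x by (rule the_equality[rotated])
  thus ?thesis using x by simp
qed

lemma tail: assumes "\<sigma> > 0"
  shows "measure (density lborel (normal_density 0 \<sigma>)) {y. \<sigma> * x \<le> y} = 1 - Phi x"
proof -
  let ?M = "density lborel (normal_density 0 \<sigma>)"
  interpret prob_space ?M using prob_space_normal_density assms by blast
  have "distributed ?M lborel (\<lambda>x. x) (normal_density 0 \<sigma>)"
    unfolding distributed_def by (simp add: distr_id2)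
  hence d: "distributed ?M lborel (\<lambda>y. (y - 0) / \<sigma>) std_normal_density"
    using normal_standard_normal_convert[OF assms, of "\<lambda>x. x" 0] by simp
  hence "distr ?M lborel (\<lambda>y. y / \<sigma>) = M0" unfolding distributed_def by simp
  hence eq: "measure M0 {x..} = measure (distr ?M lborel (\<lambda>y. y / \<sigma>)) {x..}" by simp
  have mX: "(\<lambda>y. y / \<sigma>) \<in> measurable ?M lborel" using d by (simp add: distributed_def)
  have "measure M0 {x..} = measure ?M ((\<lambda>y. y / \<sigma>) -` {x..} \<inter> space ?M)"
    unfolding eq by (rule measure_distr[OF mX]) simp
  also have "(\<lambda>y. y / \<sigma>) -` {x..} \<inter> space ?M = {y. \<sigma> * x \<le> y}"
    using assms by (auto simp: field_simps)
  finally have 1: "measure ?M {y. \<sigma> * x \<le> y} = measure M0 {x..}" by simp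
  interpret M0: prob_space M0 by (rule M0_prob)
  have "measure M0 {x..} = measure M0 ({x} \<union> {x<..})"
    by (rule arg_cong[where f="measure M0"]) auto
  also have "\<dots> = measure M0 {x} + measure M0 {x<..}"
    by (rule M0.finite_measure_Union) auto
  also have "measure M0 {x<..} = 1 - measure M0 {..x}"
    using M0.prob_compl[of "{..x}"] by (simp add: Compl_eq_Diff_UNIV[symmetric] Compl_atMost)
  finally show ?thesis using 1 M0_single unfolding Phi_def cdf_def by simp
qed



lemma count_filter: "emp_count n S t = length (filter (\<lambda>v. v \<le> t) (sort (map S [1..<n+1])))"
proof -
  have "emp_count n S t = length (filter (\<lambda>i. S i \<le> t) [1..<n+1])"
  proof -
    have "length (filter (\<lambda>i. S i \<le> t) [1..<n+1]) = card ({i. S i \<le> t} \<inter> set [1..<n+1])"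
      by (rule distinct_length_filter) simp
    also have "{i. S i \<le> t} \<inter> set [1..<n+1] = {i \<in> {1..n}. S i \<le> t}" by auto
    finally show ?thesis unfolding emp_count_def by simp
  qed
  also have "\<dots> = length (filter (\<lambda>v. v \<le> t) (map S [1..<n+1]))"
    by (simp add: filter_map comp_def)
  also have "\<dots> = length (filter (\<lambda>v. v \<le> t) (sort (map S [1..<n+1])))"
    by (simp add: filter_sort)
  finally show ?thesis .
qed

lemma count_lt:
  assumes "1 \<le> K" "K \<le> n" "t < order_stat n S K"
  shows "emp_count n S t \<le> K - 1"
proof -
  define xs where "xs = sort (map S [1..<n+1])"
  have len: "length xs = n" by (simp add: xs_def)
  have sorted: "sorted xs" by (simp add: xs_def)
  have big: "\<forall>v\<in>set (drop (K-1) xs). t < v"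
  proof
    fix v assume "v \<in> set (drop (K-1) xs)"
    then obtain j where j: "j < length (drop (K-1) xs)" "v = drop (K-1) xs ! j" by (metis in_set_conv_nth)
    hence v: "v = xs ! (K - 1 + j)" "K - 1 + j < n" using len assms by auto
    have "xs ! (K-1) \<le> xs ! (K - 1 + j)" using sorted v(2) len by (simp add: sorted_iff_nth_mono)
    thus "t < v" using assms(3) v unfolding order_stat_def xs_def by simp
  qed
  have "filter (\<lambda>v. v \<le> t) xs = filter (\<lambda>v. v \<le> t) (take (K-1) xs) @ filter (\<lambda>v. v \<le> t) (drop (K-1) xs)"
    by (metis append_take_drop_id filter_append)
  also have "filter (\<lambda>v. v \<le> t) (drop (K-1) xs) = []" using big by (auto simp: filter_empty_conv)
  finally have "length (filter (\<lambda>v. v \<le> t) xs) = length (filter (\<lambda>v. v \<le> t) (take (K-1) xs))"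
    by simp
  also have "\<dots> \<le> length (take (K-1) xs)" by (rule length_filter_le)
  also have "\<dots> \<le> K - 1" by simp
  finally show ?thesis using count_filter xs_def by simp
qed

lemma order_stat_in: assumes "1 \<le> K" "K \<le> n" shows "\<exists>i\<in>{1..n}. order_stat n S K = S i"
proof -
  have "order_stat n S K \<in> set (sort (map S [1..<n+1]))"
    unfolding order_stat_def using assms by (intro nth_mem) simp
  thus ?thesis by auto
qed



lemma bs_fst: "fst (bs_state C r' z a b (Suc j)) =
  (if C ((fst (bs_state C r' z a b j) + snd (bs_state C r' z a b j))/2) + z j \<ge> r'
   then fst (bs_state C r' z a b j) else (fst (bs_state C r' z a b j) + snd (bs_state C r' z a b j))/2)"
  by (simp add: Let_def split: prod.split)

lemma bs_snd: "snd (bs_state C r' z a b (Suc j)) =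
  (if C ((fst (bs_state C r' z a b j) + snd (bs_state C r' z a b j))/2) + z j \<ge> r'
   then (fst (bs_state C r' z a b j) + snd (bs_state C r' z a b j))/2 else snd (bs_state C r' z a b j))"
  by (simp add: Let_def split: prod.split)

lemma bs_right:
  assumes "q \<le> b" "\<And>j t. j < N \<Longrightarrow> t < q \<Longrightarrow> C t + z j < r'"
  shows "j \<le> N \<Longrightarrow> q \<le> snd (bs_state C r' z a b j)"
proof (induction j)
  case 0 thus ?case using assms by simp
next
  case (Suc j)
  hence IH: "q \<le> snd (bs_state C r' z a b j)" by simp
  show ?case
  proof (cases "C ((fst (bs_state C r' z a b j) + snd (bs_state C r' z a b j))/2) + z j \<ge> r'")
    case True
    have "\<not> (fst (bs_state C r' z a b j) + snd (bs_state C r' z a b j))/2 < q"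
    proof
      assume "(fst (bs_state C r' z a b j) + snd (bs_state C r' z a b j))/2 < q"
      hence "C ((fst (bs_state C r' z a b j) + snd (bs_state C r' z a b j))/2) + z j < r'"
        using assms(2) Suc.prems by simp
      thus False using True by simp
    qed
    thus ?thesis unfolding bs_snd using True by simp
  next
    case False thus ?thesis unfolding bs_snd using IH by simp
  qed
qed

lemma bs_meas:
  assumes C: "C \<in> borel_measurable borel" and Z: "\<And>j. j < N \<Longrightarrow> (\<lambda>z. z j) \<in> borel_measurable M"
  shows "j \<le> N \<Longrightarrow> (\<lambda>z. fst (bs_state C r' z a b j)) \<in> borel_measurable M \<and>
                     (\<lambda>z. snd (bs_state C r' z a b j)) \<in> borel_measurable M"
proof (induction j)
  case 0 thus ?case by simp
next
  case (Suc j)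
  hence f: "(\<lambda>z. fst (bs_state C r' z a b j)) \<in> borel_measurable M"
    and s: "(\<lambda>z. snd (bs_state C r' z a b j)) \<in> borel_measurable M" by auto
  have zj: "(\<lambda>z. z j) \<in> borel_measurable M" using Z Suc.prems by simp
  have mid: "(\<lambda>z. (fst (bs_state C r' z a b j) + snd (bs_state C r' z a b j))/2) \<in> borel_measurable M"
    using f s by measurable
  have cm: "(\<lambda>z. C ((fst (bs_state C r' z a b j) + snd (bs_state C r' z a b j))/2) + z j) \<in> borel_measurable M"
    using measurable_compose[OF mid C] zj by measurable
  have P: "{z \<in> space M. C ((fst (bs_state C r' z a b j) + snd (bs_state C r' z a b j))/2) + z j \<ge> r'} \<in> sets M"
    using cm by measurable
  show ?case unfolding bs_fst bs_snd
    using measurable_If[OF f mid P] measurable_If[OF mid s P] by simp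
qed

theorem lemma1:
  fixes n :: nat and S :: "nat \<Rightarrow> real" and \<alpha> a b \<sigma> \<beta> :: real and m N :: nat
  assumes "0 < \<alpha>" "\<alpha> < 1"
    and "\<lceil>(1 - \<alpha>) * (real n + 1)\<rceil> + int m \<le> int n"
    and "\<forall>i\<in>{1..n}. S i \<le> b"
    and "N \<ge> 1" and "\<sigma> > 0" and "0 < \<beta>" "\<beta> < 1"
  shows "measure (noise_space N \<sigma>)
           {z \<in> space (noise_space N \<sigma>).
              dp_bs_output n S a b \<alpha> m N \<sigma> \<beta> z
                \<ge> order_stat n S (nat \<lceil>(1 - \<alpha>) * (real n + 1)\<rceil> + m)}
         \<ge> 1 - \<beta>"
proof -
  define r where "r = \<lceil>(1 - \<alpha>) * (real n + 1)\<rceil>"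
  have "(1 - \<alpha>) * (real n + 1) > 0" using assms by simp
  hence r1: "r \<ge> 1" unfolding r_def by (metis zero_less_ceiling int_one_le_iff_zero_less)
  define K where "K = nat r + m"
  have rn: "r + int m \<le> int n" using assms(3) unfolding r_def .
  have K1: "1 \<le> K" "K \<le> n" using r1 rn unfolding K_def by auto
  have rK: "real K = real_of_int r + real m" unfolding K_def using r1 by simp
  define p where "p = 1 - \<beta> / real N"
  have p: "0 < p" "p < 1" using assms(5,7,8) unfolding p_def by (auto simp: field_simps)
  define x0 where "x0 = Phi_inv p"
  have Phix0: "Phi x0 = p" unfolding x0_def by (rule Phi_inv[OF p])
  define r' where "r' = real_of_int r + real m + (\<sigma> * x0 - 1)"
  define C where "C = (\<lambda>t. real (emp_count n S t))"
  define q where "q = order_stat n S K"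
  have qb: "q \<le> b" using order_stat_in[OF K1, of S] assms(4) unfolding q_def by auto
  have out: "dp_bs_output n S a b \<alpha> m N \<sigma> \<beta> z = snd (bs_state C r' z a b N)" for z
    unfolding dp_bs_output_def Let_def C_def r'_def r_def x0_def p_def by simp
  define Ms where "Ms = density lborel (normal_density 0 \<sigma>)"
  have Ms: "prob_space Ms" unfolding Ms_def using prob_space_normal_density assms(6) by blast
  define P where "P = noise_space N \<sigma>"
  have PP: "P = PiM {..<N} (\<lambda>_. Ms)" unfolding P_def noise_space_def Ms_def by simp
  interpret PS: product_prob_space "\<lambda>_. Ms" "{..<N}"
    unfolding product_prob_space_def product_prob_space_axioms_def product_sigma_finite_def
    using Ms prob_space_imp_sigma_finite by blast
  interpret Pp: prob_space P unfolding PP by (rule PS.P.prob_space_axioms)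
  have comp: "(\<lambda>z. z j) \<in> borel_measurable P" if "j < N" for j
  proof -
    have "(\<lambda>z. z j) \<in> measurable P Ms" unfolding PP
      using that by (intro measurable_component_singleton) auto
    moreover have "measurable P Ms = measurable P borel"
      by (rule measurable_cong_sets) (auto simp: Ms_def)
    ultimately show ?thesis by simp
  qed
  have Cm: "C \<in> borel_measurable borel"
    unfolding C_def emp_count_def
    by (intro borel_measurable_mono monoI of_nat_mono card_mono) auto
  have meas: "(\<lambda>z. snd (bs_state C r' z a b N)) \<in> borel_measurable P"
    using bs_meas[OF Cm comp, of N] by simp
  define Gd where "Gd = {z \<in> space P. q \<le> snd (bs_state C r' z a b N)}"
  have Osets: "Gd \<in> sets P" unfolding Gd_def
  proof (rule measurable_sets_Collect[OF meas, of "\<lambda>v. q \<le> v"])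
    have "{x \<in> space borel. q \<le> x} = {q..}" by auto
    thus "{x \<in> space borel. q \<le> x} \<in> sets borel" by simp
  qed
  define B where "B = (\<lambda>k. {z \<in> space P. z k \<in> {\<sigma> * x0..}})"
  have Bsets: "B k \<in> sets P" if "k < N" for k
    unfolding B_def
  proof (rule measurable_sets_Collect[OF comp[OF that], of "\<lambda>v. v \<in> {\<sigma> * x0..}"])
    have "{x \<in> space borel. x \<in> {\<sigma> * x0..}} = {\<sigma> * x0..}" by auto
    thus "{x \<in> space borel. x \<in> {\<sigma> * x0..}} \<in> sets borel" by simp
  qed
  have Bmeas: "measure P (B k) = \<beta> / real N" if "k < N" for k
  proof -
    have "emeasure P (B k) = emeasure Ms {\<sigma> * x0..}"
      unfolding B_def PP using that by (intro PS.emeasure_PiM_Collect_single) (auto simp: Ms_def)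
    hence "measure P (B k) = measure Ms {\<sigma> * x0..}" by (simp add: measure_def)
    also have "\<dots> = measure Ms {y. \<sigma> * x0 \<le> y}" by (simp add: atLeast_def)
    also have "\<dots> = 1 - Phi x0" unfolding Ms_def by (rule tail[OF assms(6)])
    finally show ?thesis using Phix0 p_def by simp
  qed
  have sub: "space P - (\<Union>k\<in>{..<N}. B k) \<subseteq> Gd"
  proof
    fix z assume z: "z \<in> space P - (\<Union>k\<in>{..<N}. B k)"
    hence zj: "z j < \<sigma> * x0" if "j < N" for j using that unfolding B_def by fastforce
    have "q \<le> snd (bs_state C r' z a b N)"
    proof (rule bs_right[OF qb _ order_refl])
      fix j t assume j: "j < N" and t: "t < q"
      have "emp_count n S t \<le> K - 1" using count_lt[OF K1] t unfolding q_def by simp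
      hence "C t \<le> real K - 1" unfolding C_def using K1 by linarith
      thus "C t + z j < r'" using zj[OF j] rK unfolding r'_def by linarith
    qed
    thus "z \<in> Gd" using z unfolding Gd_def by simp
  qed
  have "measure P (\<Union>k\<in>{..<N}. B k) \<le> (\<Sum>k\<in>{..<N}. measure P (B k))"
    by (rule Pp.finite_measure_subadditive_finite) (auto intro: Bsets)
  also have "\<dots> = \<beta>" using Bmeas assms(5) by simp
  finally have U: "measure P (\<Union>k\<in>{..<N}. B k) \<le> \<beta>" .
  have Usets: "(\<Union>k\<in>{..<N}. B k) \<in> sets P" using Bsets by auto
  have eq1: "measure P (space P - (\<Union>k\<in>{..<N}. B k)) = 1 - measure P (\<Union>k\<in>{..<N}. B k)"
    using Pp.prob_compl[OF Usets] by simp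
  have mo: "measure P (space P - (\<Union>k\<in>{..<N}. B k)) \<le> measure P Gd"
    by (rule Pp.finite_measure_mono[OF sub Osets])
  have "1 - \<beta> \<le> measure P Gd" using U eq1 mo by linarith
  thus ?thesis unfolding Gd_def P_def q_def K_def r_def out by simp
qed

end
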